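(* Let $T>0$ and for each $n\ge1$ let $\mathcal{P}_n=\{\tau^n_k:k=0,\dots,N_n\}$ be a partition of $[0,T]$ satisfying the standing partition assumptions below, and let $\mathbf{X}^n=(X^n,\mathbb{X}^n)$ be the rough step function over random increments $\xi^n_j\in\mathbb{R}^d$, $\Xi^n_j\in\mathbb{R}^{d\times d}$. Suppose that for some $q>0$ and $\alpha\in(0,1/2]$, $$\big(\mathbf{E}|X^n(\tau^n_j,\tau^n_k)|^q\big)^{1/q}\lesssim|\tau^n_j-\tau^n_k|^\alpha,\qquad \big(\mathbf{E}|\mathbb{X}^n(\tau^n_j,\tau^n_k)|^{q/2}\big)^{2/q}\lesssim|\tau^n_j-\tau^n_k|^{2\alpha}$$ for all $\tau^n_j,\tau^n_k\in\mathcal{P}_n$, uniformly in $n\ge1$. Then for every $\gamma\in(0,\alpha-q^{-1})$, $$\sup_{n\ge1}\mathbf{P}\big(|||\mathbf{X}^n|||_{\gamma,n}>M\big)\to0\quad\text{as }M\to\infty.$$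
   Context: Standing partition assumptions: $0=\tau^n_0\le\dots\le\tau^n_{N_n}=T$, $\Delta_n=\max_k|\tau^n_{k+1}-\tau^n_k|\to0$, $\sup_nN_n\Delta_n<\infty$; $\tau^n(u)$ is the largest mesh point $\le u$. Rough step function: with $\tau^n_k=\tau^n(t)$, $\tau^n_l=\tau^n(s)$, $X^n(s,t)=\sum_{j=l}^{k-1}\xi^n_j$, $\mathbb{X}^n(s,t)=\sum_{i=l}^{k-1}\sum_{j=l}^{i-1}\xi^n_i\otimes\xi^n_j+\sum_{i=l}^{k-1}\Xi^n_i$ ($\otimes$ the outer product). Discrete Hölder norm: $|||\mathbf{X}^n|||_{\gamma,n}=\max_{\tau^n_j\ne\tau^n_k}\frac{|X^n(\tau^n_j,\tau^n_k)|}{|\tau^n_j-\tau^n_k|^\gamma}+\max_{\tau^n_j\ne\tau^n_k}\frac{|\mathbb{X}^n(\tau^n_j,\tau^n_k)|^{1/2}}{|\tau^n_j-\tau^n_k|^\gamma}$, maxima over mesh points of $\mathcal{P}_n$. *)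

theory Defs
  imports "HOL-Probability.Probability"
begin

definition is_partition :: "real \<Rightarrow> (nat \<Rightarrow> real) \<Rightarrow> nat \<Rightarrow> bool" where
  "is_partition T t Nn \<longleftrightarrow> t 0 = 0 \<and> t Nn = T \<and> (\<forall>k<Nn. t k \<le> t (Suc k))"

definition mesh :: "(nat \<Rightarrow> real) \<Rightarrow> nat \<Rightarrow> real" where
  "mesh t Nn = Max ((\<lambda>k. \<bar>t (Suc k) - t k\<bar>) ` {..<Nn})"

definition outer :: "real^'d \<Rightarrow> real^'d \<Rightarrow> real^'d^'d" where
  "outer x y = (\<chi> a b. x $ a * y $ b)"

definition rsX :: "(nat \<Rightarrow> real^'d) \<Rightarrow> nat \<Rightarrow> nat \<Rightarrow> real^'d" where
  "rsX xi l k = (\<Sum>j\<in>{l..<k}. xi j)"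

definition rsXX :: "(nat \<Rightarrow> real^'d) \<Rightarrow> (nat \<Rightarrow> real^'d^'d) \<Rightarrow> nat \<Rightarrow> nat \<Rightarrow> real^'d^'d" where
  "rsXX xi Xi l k = (\<Sum>i\<in>{l..<k}. \<Sum>j\<in>{l..<i}. outer (xi i) (xi j)) + (\<Sum>i\<in>{l..<k}. Xi i)"

definition disc_holder_norm ::
  "real \<Rightarrow> (nat \<Rightarrow> real) \<Rightarrow> nat \<Rightarrow> (nat \<Rightarrow> real^'d) \<Rightarrow> (nat \<Rightarrow> real^'d^'d) \<Rightarrow> real" where
  "disc_holder_norm \<gamma> t Nn xi Xi =
     (let S = {(j,k). j \<le> Nn \<and> k \<le> Nn \<and> t j \<noteq> t k} in
       Max ((\<lambda>(j,k). norm (rsX xi j k) / \<bar>t j - t k\<bar> powr \<gamma>) ` S)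
     + Max ((\<lambda>(j,k). sqrt (norm (rsXX xi Xi j k)) / \<bar>t j - t k\<bar> powr \<gamma>) ` S))"

end

theory Submission
  imports Defs
begin
lemma outer_sum_left: "outer (sum f S) y = (\<Sum>i\<in>S. outer (f i) y)"
  by (simp add: outer_def vec_eq_iff sum_distrib_right)
lemma outer_sum_right: "outer x (sum f S) = (\<Sum>i\<in>S. outer x (f i))"
  by (simp add: outer_def vec_eq_iff sum_distrib_left)
lemma outer_zero [simp]: "outer 0 y = 0" "outer x 0 = 0"
  by (simp_all add: outer_def vec_eq_iff)

lemma norm_outer: "norm (outer x y) = norm x * norm y"
proof -
  have r: "norm (outer x y $ a) = norm (x $ a) * norm y" for a
  proof -
    have "outer x y $ a = x $ a *\<^sub>R y" by (simp add: outer_def vec_eq_iff)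
    then show ?thesis by simp
  qed
  have "norm (outer x y) = L2_set (\<lambda>a. norm (x $ a) * norm y) UNIV"
    by (subst norm_vec_def, rule L2_set_cong, rule refl, rule r)
  also have "\<dots> = norm x * norm y"
    by (subst L2_set_left_distrib[symmetric]) (simp_all add: norm_vec_def[of x])
  finally show ?thesis .
qed

lemma rsX_split: "a \<le> b \<Longrightarrow> b \<le> c \<Longrightarrow> rsX x a c = rsX x a b + rsX x b c"
  unfolding rsX_def by (simp add: sum.atLeastLessThan_concat)

lemma rsX_empty: "c \<le> a \<Longrightarrow> rsX x a c = 0"
  unfolding rsX_def by simp
lemma rsXX_empty: "c \<le> a \<Longrightarrow> rsXX x X a c = 0"
  unfolding rsXX_def by simp

lemma rsXX_split: assumes "a \<le> b" "b \<le> c"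
  shows "rsXX x X a c = rsXX x X a b + rsXX x X b c + outer (rsX x b c) (rsX x a b)"
proof -
  have I: "(\<Sum>i\<in>{a..<c}. g i) = (\<Sum>i\<in>{a..<b}. g i) + (\<Sum>i\<in>{b..<c}. g i)" for g :: "nat \<Rightarrow> real^'a^'a"
    using assms by (simp add: sum.atLeastLessThan_concat)
  have J: "(\<Sum>j\<in>{a..<i}. outer (x i) (x j)) = (\<Sum>j\<in>{a..<b}. outer (x i) (x j)) + (\<Sum>j\<in>{b..<i}. outer (x i) (x j))"
    if "i \<in> {b..<c}" for i
    using assms that by (simp add: sum.atLeastLessThan_concat)
  have "(\<Sum>i\<in>{b..<c}. \<Sum>j\<in>{a..<i}. outer (x i) (x j)) =
     (\<Sum>i\<in>{b..<c}. \<Sum>j\<in>{a..<b}. outer (x i) (x j)) + (\<Sum>i\<in>{b..<c}. \<Sum>j\<in>{b..<i}. outer (x i) (x j))"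
    by (simp add: J sum.distrib)
  moreover have "(\<Sum>i\<in>{b..<c}. \<Sum>j\<in>{a..<b}. outer (x i) (x j)) = outer (rsX x b c) (rsX x a b)"
    by (simp add: rsX_def outer_sum_left outer_sum_right sum.swap[of _ "{b..<c}"])
  ultimately show ?thesis
    unfolding rsXX_def I[of "\<lambda>i. \<Sum>j\<in>{a..<i}. outer (x i) (x j)"] I[of X]
    by (simp add: algebra_simps)
qed

definition gd :: "(nat \<Rightarrow> real^'d) \<Rightarrow> (nat \<Rightarrow> real^'d^'d) \<Rightarrow> nat \<Rightarrow> nat \<Rightarrow> real \<Rightarrow> bool" where
  "gd x X a b e \<longleftrightarrow> norm (rsX x a b) \<le> e \<and> norm (rsXX x X a b) \<le> e\<^sup>2"

lemma gd_mono: "gd x X a b e \<Longrightarrow> 0 \<le> e \<Longrightarrow> e \<le> e' \<Longrightarrow> gd x X a b e'"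
  unfolding gd_def by (meson order_trans power_mono)

lemma gd_empty: "b \<le> a \<Longrightarrow> 0 \<le> e \<Longrightarrow> gd x X a b e"
  by (simp add: gd_def rsX_empty rsXX_empty)

lemma gd_chen: assumes "a \<le> b" "b \<le> c" "gd x X a b e1" "gd x X b c e2" "0 \<le> e1" "0 \<le> e2"
  shows "gd x X a c (e1 + e2)"
proof -
  have X: "norm (rsX x a c) \<le> e1 + e2"
    using assms by (simp add: rsX_split[OF assms(1,2)] gd_def norm_triangle_le add_mono)
  have "norm (rsXX x X a c) \<le> norm (rsXX x X a b) + norm (rsXX x X b c) + norm (rsX x b c) * norm (rsX x a b)"
    unfolding rsXX_split[OF assms(1,2)]
    by (metis norm_outer norm_triangle_le order_refl add_mono)
  also have "\<dots> \<le> e1\<^sup>2 + e2\<^sup>2 + e2 * e1"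
    using assms unfolding gd_def by (intro add_mono mult_mono) auto
  also have "\<dots> \<le> (e1 + e2)\<^sup>2"
    using assms by (simp add: power2_eq_square algebra_simps)
  finally show ?thesis using X by (simp add: gd_def)
qed

locale chain =
  fixes T :: real and t :: "nat \<Rightarrow> real" and N :: nat
  assumes Tpos: "0 < T" and t0: "t 0 = 0" and tN: "t N = T"
    and tstep: "\<And>k. k < N \<Longrightarrow> t k \<le> t (Suc k)"
begin

lemma tmono: assumes "a \<le> b" "b \<le> N" shows "t a \<le> t b"
  using assms
proof (induction b rule: dec_induct)
  case base then show ?case by simp
next
  case (step n) then show ?case using tstep[of n] by simp
qed

lemma trange: "k \<le> N \<Longrightarrow> 0 \<le> t k \<and> t k \<le> T"
  using tmono[of 0 k] tmono[of k N] t0 tN by auto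

lemma tless_idx: "a \<le> N \<Longrightarrow> b \<le> N \<Longrightarrow> t a < t b \<Longrightarrow> a < b"
  using tmono[of b a] by (cases "a < b") auto

definition dl :: "nat \<Rightarrow> real" where "dl r = T / 2^r"

lemma dl_pos: "0 < dl r" using Tpos by (simp add: dl_def)
lemma dl_Suc: "dl (Suc r) = dl r / 2" by (simp add: dl_def)
lemma dl_0: "dl 0 = T" by (simp add: dl_def)
lemma dl_anti: "m \<le> n \<Longrightarrow> dl n \<le> dl m"
  unfolding dl_def using Tpos by (intro divide_left_mono power_increasing) auto
lemma dl_less: "dl n < dl m \<Longrightarrow> m < n"
  using dl_anti[of n m] by (cases "m < n") auto

definition L :: "real \<Rightarrow> nat" where "L y = Max {k. k \<le> N \<and> t k \<le> y}"

lemma L: assumes "0 \<le> y" shows "L y \<le> N" "t (L y) \<le> y" "\<And>k. k \<le> N \<Longrightarrow> t k \<le> y \<Longrightarrow> t k \<le> t (L y)"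
proof -
  have f: "finite {k. k \<le> N \<and> t k \<le> y}" by simp
  have ne: "{k. k \<le> N \<and> t k \<le> y} \<noteq> {}" using assms t0 by auto
  have "L y \<in> {k. k \<le> N \<and> t k \<le> y}" unfolding L_def using Max_in[OF f ne] .
  then show "L y \<le> N" "t (L y) \<le> y" by auto
  fix k assume "k \<le> N" "t k \<le> y"
  then have "k \<le> L y" unfolding L_def using Max_ge[OF f] by auto
  then show "t k \<le> t (L y)" using tmono \<open>L y \<le> N\<close> by auto
qed

definition U :: "real \<Rightarrow> nat" where "U y = Min {k. k \<le> N \<and> y \<le> t k}"

lemma U: assumes "y \<le> T" shows "U y \<le> N" "y \<le> t (U y)" "\<And>k. k \<le> N \<Longrightarrow> y \<le> t k \<Longrightarrow> t (U y) \<le> t k"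
proof -
  have f: "finite {k. k \<le> N \<and> y \<le> t k}" by simp
  have ne: "{k. k \<le> N \<and> y \<le> t k} \<noteq> {}" using assms tN by auto
  have "U y \<in> {k. k \<le> N \<and> y \<le> t k}" unfolding U_def using Min_in[OF f ne] .
  then show "U y \<le> N" "y \<le> t (U y)" by auto
  fix k assume "k \<le> N" "y \<le> t k"
  then have "U y \<le> k" unfolding U_def using Min_le[OF f] by auto
  then show "t (U y) \<le> t k" using tmono \<open>k \<le> N\<close> by auto
qed

definition LU :: "bool \<Rightarrow> real \<Rightarrow> nat" where "LU b y = (if b then L y else U y)"

definition Pset :: "nat \<Rightarrow> (nat \<times> nat) set" where
  "Pset r = Set.filter (\<lambda>(a,b). a \<le> N \<and> b \<le> N \<and> \<bar>t a - t b\<bar> \<le> 2 * dl r)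
    ((\<lambda>(i,j,b1,b2). (LU b1 (real i * dl (Suc r)), LU b2 (real (i+j) * dl (Suc r))))
       ` ({..2^Suc r} \<times> {..2::nat} \<times> (UNIV::bool set) \<times> (UNIV::bool set)))"

lemma Pset_finite: "finite (Pset r)"
  unfolding Pset_def by simp

lemma card_Pset: "card (Pset r) \<le> 12 * (2^Suc r + 1)"
proof -
  let ?D = "{..(2::nat)^Suc r} \<times> {..2::nat} \<times> (UNIV::bool set) \<times> (UNIV::bool set)"
  let ?f = "(\<lambda>(i,j,b1,b2). (LU b1 (real i * dl (Suc r)), LU b2 (real (i+j) * dl (Suc r))))"
  have "card (Pset r) \<le> card (?f ` ?D)"
    unfolding Pset_def by (rule card_mono) auto
  also have "\<dots> \<le> card ?D" by (rule card_image_le) simp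
  also have "card ?D = (2^Suc r + 1) * 3 * 2 * 2"
    by (simp add: card_cartesian_product)
  finally show ?thesis by simp
qed

lemma Pset_mem:
  assumes "a \<le> N" "b \<le> N" "\<bar>t a - t b\<bar> \<le> 2 * dl r" "i \<le> 2^Suc r" "j \<le> 2"
    "a = LU bl (real i * dl (Suc r))" "b = LU br (real (i+j) * dl (Suc r))"
  shows "(a,b) \<in> Pset r"
  unfolding Pset_def using assms by (auto intro!: image_eqI[where x="(i,j,bl,br)"])

definition ci :: "nat \<Rightarrow> real \<Rightarrow> nat" where "ci r x = nat \<lceil>x / dl r\<rceil>"
definition fi :: "nat \<Rightarrow> real \<Rightarrow> nat" where "fi r x = nat \<lfloor>x / dl r\<rfloor>"

lemma ci_real: "0 \<le> x \<Longrightarrow> real (ci r x) = of_int \<lceil>x / dl r\<rceil>"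
  using dl_pos[of r] by (simp add: ci_def)
lemma fi_real: "0 \<le> x \<Longrightarrow> real (fi r x) = of_int \<lfloor>x / dl r\<rfloor>"
  using dl_pos[of r] by (simp add: fi_def)

lemma ci_bounds: assumes "0 \<le> x" shows "x \<le> real (ci r x) * dl r" "real (ci r x) * dl r < x + dl r"
proof -
  have p: "0 < dl r" by (rule dl_pos)
  have c: "of_int \<lceil>x / dl r\<rceil> - 1 < x / dl r \<and> x / dl r \<le> of_int \<lceil>x / dl r\<rceil>"
    by (rule ceiling_correct)
  show "x \<le> real (ci r x) * dl r" using mult_right_mono[OF le_of_int_ceiling[of "x / dl r"], of "dl r"] p by (simp add: ci_real[OF assms])
  show "real (ci r x) * dl r < x + dl r" using c p
    by (simp add: ci_real[OF assms] less_divide_eq algebra_simps)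
qed

lemma fi_bounds: assumes "0 \<le> x" shows "real (fi r x) * dl r \<le> x" "x < real (fi r x) * dl r + dl r"
proof -
  have p: "0 < dl r" by (rule dl_pos)
  have c: "of_int \<lfloor>x / dl r\<rfloor> \<le> x / dl r" "x / dl r < of_int \<lfloor>x / dl r\<rfloor> + 1"
    by linarith+
  show "real (fi r x) * dl r \<le> x" using c p by (simp add: fi_real[OF assms] le_divide_eq)
  show "x < real (fi r x) * dl r + dl r" using c p
    by (simp add: fi_real[OF assms] divide_less_eq algebra_simps)
qed

lemma div_Suc: "x / dl (Suc r) = 2 * (x / dl r)"
  by (simp add: dl_Suc)

lemma ci_Suc: assumes "0 \<le> x" shows "ci (Suc r) x \<le> 2 * ci r x" "2 * ci r x \<le> ci (Suc r) x + 1"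
proof -
  define z where "z = x / dl r"
  have z: "0 \<le> z" using assms dl_pos[of r] by (simp add: z_def)
  have a: "x / dl (Suc r) = 2 * z" by (simp add: z_def div_Suc)
  have c1: "of_int \<lceil>z\<rceil> - 1 < z \<and> z \<le> of_int \<lceil>z\<rceil>" by (rule ceiling_correct)
  have c2: "of_int \<lceil>2*z\<rceil> - 1 < 2*z \<and> 2*z \<le> of_int \<lceil>2*z\<rceil>" by (rule ceiling_correct)
  have i1: "\<lceil>2*z\<rceil> \<le> 2 * \<lceil>z\<rceil>" using c1 by (simp add: ceiling_le_iff)
  have "of_int (2 * \<lceil>z\<rceil>) < (of_int (\<lceil>2*z\<rceil> + 2) :: real)" using c1 le_of_int_ceiling[of "2*z"] by linarith
  then have i2: "2 * \<lceil>z\<rceil> \<le> \<lceil>2*z\<rceil> + 1" by linarith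
  have "0 \<le> \<lceil>z\<rceil>" "0 \<le> \<lceil>2*z\<rceil>" using z by auto
  then show "ci (Suc r) x \<le> 2 * ci r x" "2 * ci r x \<le> ci (Suc r) x + 1"
    using i1 i2 by (simp_all add: ci_def a z_def[symmetric] nat_le_iff nat_mult_distrib)
qed

lemma fi_Suc: assumes "0 \<le> x" shows "2 * fi r x \<le> fi (Suc r) x" "fi (Suc r) x \<le> 2 * fi r x + 1"
proof -
  define z where "z = x / dl r"
  have z: "0 \<le> z" using assms dl_pos[of r] by (simp add: z_def)
  have a: "x / dl (Suc r) = 2 * z" by (simp add: z_def div_Suc)
  have i1: "2 * \<lfloor>z\<rfloor> \<le> \<lfloor>2*z\<rfloor>" by linarith
  have i2: "\<lfloor>2*z\<rfloor> \<le> 2 * \<lfloor>z\<rfloor> + 1" by linarith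
  have "0 \<le> \<lfloor>z\<rfloor>" "0 \<le> \<lfloor>2*z\<rfloor>" using z by auto
  then show "2 * fi r x \<le> fi (Suc r) x" "fi (Suc r) x \<le> 2 * fi r x + 1"
    using i1 i2 by (simp_all add: fi_def a z_def[symmetric] nat_le_iff nat_mult_distrib)
qed

lemma T_div: "T / dl r = 2^r"
  using Tpos by (simp add: dl_def)

lemma ci_le: assumes "0 \<le> x" "x \<le> T" shows "ci r x \<le> 2^r"
proof -
  have "x / dl r \<le> T / dl r" using assms dl_pos[of r] by (simp add: divide_right_mono)
  then have "x / dl r \<le> 2^r" by (simp add: T_div)
  then have "\<lceil>x / dl r\<rceil> \<le> 2^r" by (simp add: ceiling_le_iff)
  then show ?thesis by (simp add: ci_def nat_le_iff)
qed

lemma fi_le: assumes "0 \<le> x" "x \<le> T" shows "fi r x \<le> 2^r"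
proof -
  have "x / dl r \<le> T / dl r" using assms dl_pos[of r] by (simp add: divide_right_mono)
  then have "x / dl r \<le> 2^r" by (simp add: T_div)
  then have "\<lfloor>x / dl r\<rfloor> \<le> \<lfloor>(2::real)^r\<rfloor>" by (rule floor_mono)
  then have "\<lfloor>x / dl r\<rfloor> \<le> 2^r" by simp
  then show ?thesis by (simp add: fi_def nat_le_iff)
qed

lemma grid_Suc: "real (2 * k) * dl (Suc r) = real k * dl r"
  by (simp add: dl_Suc)

end

context chain begin

definition Zt :: "(nat \<Rightarrow> real^'d) \<Rightarrow> (nat \<Rightarrow> real^'d^'d) \<Rightarrow> bool" where
  "Zt x X \<longleftrightarrow> (\<forall>a b. a \<le> b \<longrightarrow> b \<le> N \<longrightarrow> t a = t b \<longrightarrow> rsX x a b = 0 \<and> rsXX x X a b = 0)"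

lemma gd_tie: "Zt x X \<Longrightarrow> a \<le> N \<Longrightarrow> b \<le> N \<Longrightarrow> t a = t b \<Longrightarrow> 0 \<le> e \<Longrightarrow> gd x X a b e"
  by (cases "a \<le> b") (auto simp: Zt_def gd_def rsX_empty rsXX_empty)

lemma gd_trans:
  assumes Z: "Zt x X" and N: "a \<le> N" "b \<le> N" "c \<le> N" and tt: "t a \<le> t b" "t b \<le> t c"
    and g1: "gd x X a b e1" and g2: "gd x X b c e2" and e: "0 \<le> e1" "0 \<le> e2"
  shows "gd x X a c (e1 + e2)"
proof (cases "c \<le> a")
  case True then show ?thesis using e by (intro gd_empty) auto
next
  case False
  consider (m) "a \<le> b" "b \<le> c" | (l) "b < a" | (r) "c < b" by linarith
  then show ?thesis
  proof cases
    case m then show ?thesis using gd_chen g1 g2 e by blast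
  next
    case l
    have "t b = t a" using tmono[of b a] l N tt by auto
    then have z: "rsX x b a = 0" "rsXX x X b a = 0" using Z l N unfolding Zt_def by auto
    have "rsX x b c = rsX x a c" using rsX_split[of b a c x] l False z by simp
    moreover have "rsXX x X b c = rsXX x X a c" using rsXX_split[of b a c x X] l False z by simp
    ultimately have h: "gd x X a c e2" using g2 by (simp add: gd_def)
    show ?thesis using gd_mono[OF h, of "e1+e2"] e by auto
  next
    case r
    have "t c = t b" using tmono[of c b] r N tt by auto
    then have z: "rsX x c b = 0" "rsXX x X c b = 0" using Z r N unfolding Zt_def by auto
    have "rsX x a b = rsX x a c" using rsX_split[of a c b x] r False z by simp
    moreover have "rsXX x X a b = rsXX x X a c" using rsXX_split[of a c b x X] r False z by simp
    ultimately have h: "gd x X a c e1" using g1 by (simp add: gd_def)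
    show ?thesis using gd_mono[OF h, of "e1+e2"] e by auto
  qed
qed

definition q :: "nat \<Rightarrow> nat \<Rightarrow> nat" where "q m s = L (real (ci m (t s)) * dl m)"
definition p :: "nat \<Rightarrow> nat \<Rightarrow> nat" where "p m s = U (real (fi m (t s)) * dl m)"

lemma q_props: assumes "s \<le> N" shows "q m s \<le> N" "t s \<le> t (q m s)" "t (q m s) \<le> real (ci m (t s)) * dl m"
  "t (q m s) < t s + dl m"
proof -
  have x: "0 \<le> t s" using trange assms by auto
  note c = ci_bounds[OF x, of m]
  have y: "0 \<le> real (ci m (t s)) * dl m" using c x by linarith
  show "q m s \<le> N" "t (q m s) \<le> real (ci m (t s)) * dl m" using L[OF y] by (auto simp: q_def)
  show "t s \<le> t (q m s)" using L(3)[OF y assms] c by (simp add: q_def)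
  show "t (q m s) < t s + dl m" using L(2)[OF y] c by (simp add: q_def)
qed

lemma q_Suc: assumes "s \<le> N" shows "t (q (Suc m) s) \<le> t (q m s)"
proof -
  have x: "0 \<le> t s" using trange assms by auto
  have "real (ci (Suc m) (t s)) * dl (Suc m) \<le> real (2 * ci m (t s)) * dl (Suc m)"
    using ci_Suc[OF x, of m] dl_pos[of "Suc m"] by (intro mult_right_mono) auto
  then have le: "real (ci (Suc m) (t s)) * dl (Suc m) \<le> real (ci m (t s)) * dl m"
    by (simp only: grid_Suc)
  have y: "0 \<le> real (ci m (t s)) * dl m" using ci_bounds[OF x, of m] x by linarith
  show ?thesis unfolding q_def[of m]
    using L(3)[OF y q_props(1)[OF assms, of "Suc m"]] q_props(3)[OF assms, of "Suc m"] le by simp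
qed

lemma q_link: assumes "s \<le> N" shows "(q (Suc m) s, q m s) \<in> Pset m"
proof -
  have x: "0 \<le> t s" "t s \<le> T" using trange assms by auto
  let ?i = "ci (Suc m) (t s)" and ?k = "ci m (t s)"
  have c: "?i \<le> 2 * ?k" "2 * ?k \<le> ?i + 1" using ci_Suc[OF x(1)] by auto
  have sep: "\<bar>t (q (Suc m) s) - t (q m s)\<bar> \<le> 2 * dl m"
    using q_props[OF assms, of m] q_props[OF assms, of "Suc m"] dl_Suc[of m] dl_pos[of m] by auto
  show ?thesis
  proof (rule Pset_mem[where i="?i" and j="2 * ?k - ?i" and bl=True and br=True])
    show "?i \<le> 2 ^ Suc m" using ci_le[OF x, of "Suc m"] by simp
    show "2 * ?k - ?i \<le> 2" using c by linarith
    show "q (Suc m) s = LU True (real ?i * dl (Suc m))" by (simp add: LU_def q_def)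
    have "?i + (2 * ?k - ?i) = 2 * ?k" using c by linarith
    then show "q m s = LU True (real (?i + (2 * ?k - ?i)) * dl (Suc m))"
      by (simp only: grid_Suc LU_def q_def if_True)
  qed (use q_props[OF assms] sep in auto)
qed

lemma p_props: assumes "s \<le> N" shows "p m s \<le> N" "t (p m s) \<le> t s" "real (fi m (t s)) * dl m \<le> t (p m s)"
  "t s - dl m < t (p m s)"
proof -
  have x: "0 \<le> t s" "t s \<le> T" using trange assms by auto
  note c = fi_bounds[OF x(1), of m]
  have y: "real (fi m (t s)) * dl m \<le> T" using c x by linarith
  show "p m s \<le> N" "real (fi m (t s)) * dl m \<le> t (p m s)" using U[OF y] by (auto simp: p_def)
  show "t (p m s) \<le> t s" using U(3)[OF y assms] c by (simp add: p_def)
  show "t s - dl m < t (p m s)" using U(2)[OF y] c by (simp add: p_def)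
qed

lemma p_Suc: assumes "s \<le> N" shows "t (p m s) \<le> t (p (Suc m) s)"
proof -
  have x: "0 \<le> t s" "t s \<le> T" using trange assms by auto
  have "real (2 * fi m (t s)) * dl (Suc m) \<le> real (fi (Suc m) (t s)) * dl (Suc m)"
    using fi_Suc[OF x(1), of m] dl_pos[of "Suc m"] by (intro mult_right_mono) auto
  then have le: "real (fi m (t s)) * dl m \<le> real (fi (Suc m) (t s)) * dl (Suc m)"
    by (simp only: grid_Suc)
  have y: "real (fi m (t s)) * dl m \<le> T" using fi_bounds[OF x(1), of m] x by linarith
  show ?thesis unfolding p_def[of m]
    using U(3)[OF y p_props(1)[OF assms, of "Suc m"]] p_props(3)[OF assms, of "Suc m"] le by simp
qed

lemma p_link: assumes "s \<le> N" shows "(p m s, p (Suc m) s) \<in> Pset m"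
proof -
  have x: "0 \<le> t s" "t s \<le> T" using trange assms by auto
  let ?i = "2 * fi m (t s)" and ?k = "fi (Suc m) (t s)"
  have c: "?i \<le> ?k" "?k \<le> ?i + 1" using fi_Suc[OF x(1)] by auto
  have sep: "\<bar>t (p m s) - t (p (Suc m) s)\<bar> \<le> 2 * dl m"
    using p_props[OF assms, of m] p_props[OF assms, of "Suc m"] dl_Suc[of m] dl_pos[of m] by auto
  show ?thesis
  proof (rule Pset_mem[where i="?i" and j="?k - ?i" and bl=False and br=False])
    show "?i \<le> 2 ^ Suc m" using fi_le[OF x, of m] by simp
    show "?k - ?i \<le> 2" using c by linarith
    show "p m s = LU False (real ?i * dl (Suc m))" by (simp only: grid_Suc LU_def p_def if_False)
    have "?i + (?k - ?i) = ?k" using c by linarith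
    then show "p (Suc m) s = LU False (real (?i + (?k - ?i)) * dl (Suc m))"
      by (simp add: LU_def p_def)
  qed (use p_props[OF assms] sep in auto)
qed

end

context chain begin

definition Good :: "(nat \<Rightarrow> real^'d) \<Rightarrow> (nat \<Rightarrow> real^'d^'d) \<Rightarrow> real \<Rightarrow> real \<Rightarrow> nat \<Rightarrow> bool" where
  "Good x X g K R \<longleftrightarrow> (\<forall>r<R. \<forall>ab\<in>Pset r. gd x X (fst ab) (snd ab) (K * dl r powr g))"

lemma Good_use: "Good x X g K R \<Longrightarrow> r < R \<Longrightarrow> (a,b) \<in> Pset r \<Longrightarrow> gd x X a b (K * dl r powr g)"
  unfolding Good_def by (metis fst_conv snd_conv)

definition Rprop :: "nat \<Rightarrow> bool" where
  "Rprop R \<longleftrightarrow> (\<forall>a b. a \<le> N \<longrightarrow> b \<le> N \<longrightarrow> t a < t b \<longrightarrow> 2 * dl R < t b - t a)"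

definition F :: "real \<Rightarrow> nat \<Rightarrow> real" where "F g m = dl m powr g / (1 - (1/2) powr g)"

lemma half_powr: "0 < g \<Longrightarrow> (1/2::real) powr g < 1"
  using powr_less_mono2[of g "1/2" 1] by simp

lemma F_rec: assumes "0 < g" shows "F g m = dl m powr g + F g (Suc m)"
proof -
  have c: "(1/2::real) powr g < 1" by (rule half_powr[OF assms])
  have e1: "dl (Suc m) powr g = dl m powr g * (1/2) powr g"
  proof -
    have "dl (Suc m) = dl m * (1/2)" by (simp add: dl_Suc)
    then show ?thesis by (simp only: powr_mult)
  qed
  have e2: "a / (1 - c) = a + a * c / (1 - c)" if "c < 1" for a c :: real
  proof -
    have "a + a * c / (1 - c) = (a * (1 - c) + a * c) / (1 - c)" using that by (simp add: add_divide_distrib)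
    also have "\<dots> = a / (1 - c)" by (simp add: algebra_simps)
    finally show ?thesis by simp
  qed
  show ?thesis unfolding F_def e1 by (rule e2[OF c])
qed

lemma F_nonneg: "0 < g \<Longrightarrow> 0 \<le> F g m"
  using half_powr[of g] by (simp add: F_def)

lemma right_chain:
  assumes Z: "Zt x X" and G: "Good x X g K R" and R: "Rprop R" and K: "0 \<le> K" and g: "0 < g"
    and s: "s \<le> N" and m: "m \<le> R"
  shows "gd x X s (q m s) (K * F g m)"
  using m
proof (induction m rule: inc_induct)
  case base
  have "t (q R s) = t s"
  proof (rule ccontr)
    assume "t (q R s) \<noteq> t s"
    then have "t s < t (q R s)" using q_props[OF s, of R] by auto
    then have "2 * dl R < t (q R s) - t s" using R q_props[OF s, of R] s unfolding Rprop_def by auto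
    then show False using q_props[OF s, of R] dl_pos[of R] by auto
  qed
  then show ?case using gd_tie[OF Z s q_props(1)[OF s, of R]] K F_nonneg[OF g, of R] by simp
next
  case (step n)
  have l: "gd x X (q (Suc n) s) (q n s) (K * dl n powr g)"
    by (rule Good_use[OF G step.hyps(2) q_link[OF s]])
  have "gd x X s (q n s) (K * F g (Suc n) + K * dl n powr g)"
    by (rule gd_trans[OF Z s q_props(1)[OF s] q_props(1)[OF s] q_props(2)[OF s] q_Suc[OF s] step.IH l])
      (use K F_nonneg[OF g] in auto)
  then show ?case using F_rec[OF g, of n] by (simp add: algebra_simps)
qed

lemma left_chain:
  assumes Z: "Zt x X" and G: "Good x X g K R" and R: "Rprop R" and K: "0 \<le> K" and g: "0 < g"
    and s: "s \<le> N" and m: "m \<le> R"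
  shows "gd x X (p m s) s (K * F g m)"
  using m
proof (induction m rule: inc_induct)
  case base
  have "t (p R s) = t s"
  proof (rule ccontr)
    assume "t (p R s) \<noteq> t s"
    then have "t (p R s) < t s" using p_props[OF s, of R] by auto
    then have "2 * dl R < t s - t (p R s)" using R p_props[OF s, of R] s unfolding Rprop_def by auto
    then show False using p_props[OF s, of R] dl_pos[of R] by auto
  qed
  then show ?case using gd_tie[OF Z p_props(1)[OF s, of R] s] K F_nonneg[OF g, of R] by simp
next
  case (step n)
  have l: "gd x X (p n s) (p (Suc n) s) (K * dl n powr g)"
    by (rule Good_use[OF G step.hyps(2) p_link[OF s]])
  have "gd x X (p n s) s (K * dl n powr g + K * F g (Suc n))"
    by (rule gd_trans[OF Z p_props(1)[OF s] p_props(1)[OF s] s p_Suc[OF s] p_props(2)[OF s] l step.IH])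
      (use K F_nonneg[OF g] in auto)
  then show ?case using F_rec[OF g, of n] by (simp add: algebra_simps)
qed

lemma exists_level: assumes "0 < h" "h \<le> T" shows "\<exists>m. dl m \<le> h \<and> h < 2 * dl m"
proof -
  obtain n where n: "(1/2::real)^n < h / T" using real_arch_pow_inv[of "h/T" "1/2"] assms Tpos by auto
  have "dl n \<le> h" using n Tpos by (simp add: dl_def power_divide field_simps)
  define m where "m = (LEAST m. dl m \<le> h)"
  have m1: "dl m \<le> h" unfolding m_def by (rule LeastI[of _ n]) fact
  have "h < 2 * dl m"
  proof (cases m)
    case 0 then show ?thesis using m1 assms Tpos dl_0 by auto
  next
    case (Suc k)
    have "\<not> dl k \<le> h" using not_less_Least[of k "\<lambda>m. dl m \<le> h"] Suc unfolding m_def by auto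
    then show ?thesis using Suc dl_Suc[of k] by auto
  qed
  with m1 show ?thesis by blast
qed

definition c1 :: "real \<Rightarrow> real" where "c1 g = 2 / (1 - (1/2) powr g) + 1"

lemma c1_pos: "0 < g \<Longrightarrow> 0 < c1 g"
  using half_powr[of g] by (simp add: c1_def add_pos_nonneg)

lemma main_bound:
  assumes Z: "Zt x X" and G: "Good x X g K R" and R: "Rprop R" and K: "0 \<le> K" and g: "0 < g"
    and s: "s \<le> N" and u: "u \<le> N" and st: "t s < t u"
  shows "gd x X s u (K * c1 g * (t u - t s) powr g)"
proof -
  define h where "h = t u - t s"
  have h: "0 < h" "h \<le> T" using st trange[OF s] trange[OF u] by (auto simp: h_def)
  obtain m where m: "dl m \<le> h" "h < 2 * dl m" using exists_level[OF h] by blast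
  have "2 * dl R < h" using R s u st unfolding Rprop_def h_def by auto
  then have mR: "m < R" using m by (intro dl_less) auto
  have x1: "0 \<le> t s" "t s \<le> T" and x2: "0 \<le> t u" "t u \<le> T" using trange s u by auto
  let ?k1 = "ci m (t s)" and ?k2 = "fi m (t u)"
  have b1: "real ?k1 * dl m < t s + dl m" using ci_bounds[OF x1(1)] by auto
  have b2: "real ?k2 * dl m \<le> t u" "t u < real ?k2 * dl m + dl m" using fi_bounds[OF x2(1)] by auto
  have "real ?k1 * dl m < (real ?k2 + 1) * dl m" using b1 b2 m h_def by (simp add: algebra_simps)
  then have "real ?k1 < real ?k2 + 1" using dl_pos[of m] by (simp only: mult_less_cancel_right_pos)
  then have k12: "?k1 \<le> ?k2" by linarith
  have "real ?k2 * dl m < (real ?k1 + 2) * dl m"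
    using ci_bounds[OF x1(1), of m] b2 m h_def by (simp add: algebra_simps)
  then have "real ?k2 < real ?k1 + 2" using dl_pos[of m] by (simp only: mult_less_cancel_right_pos)
  then have k21: "?k2 \<le> ?k1 + 1" by linarith
  have yy: "real ?k1 * dl m \<le> real ?k2 * dl m" using k12 dl_pos[of m] by (intro mult_right_mono) auto
  have tab: "t (q m s) \<le> t (p m u)" using q_props(3)[OF s, of m] p_props(3)[OF u, of m] yy by linarith
  have link: "(q m s, p m u) \<in> Pset m"
  proof (rule Pset_mem[where i="2 * ?k1" and j="2 * ?k2 - 2 * ?k1" and bl=True and br=False])
    show "2 * ?k1 \<le> 2 ^ Suc m" using k12 fi_le[OF x2, of m] by simp
    show "2 * ?k2 - 2 * ?k1 \<le> 2" using k21 by linarith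
    show "q m s = LU True (real (2 * ?k1) * dl (Suc m))" by (simp only: grid_Suc LU_def q_def if_True)
    have "2 * ?k1 + (2 * ?k2 - 2 * ?k1) = 2 * ?k2" using k12 by linarith
    then show "p m u = LU False (real (2 * ?k1 + (2 * ?k2 - 2 * ?k1)) * dl (Suc m))"
      by (simp only: grid_Suc LU_def p_def if_False)
    show "\<bar>t (q m s) - t (p m u)\<bar> \<le> 2 * dl m"
      using tab q_props(2)[OF s, of m] p_props(2)[OF u, of m] m h_def by auto
  qed (use q_props[OF s] p_props[OF u] in auto)
  have gl: "gd x X (q m s) (p m u) (K * dl m powr g)"
    by (rule Good_use[OF G mR link])
  have A: "gd x X s (q m s) (K * F g m)" by (rule right_chain[OF Z G R K g s]) (use mR in auto)
  have B: "gd x X (p m u) u (K * F g m)" by (rule left_chain[OF Z G R K g u]) (use mR in auto)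
  have F0: "0 \<le> K * F g m" using K F_nonneg[OF g] by auto
  have AB: "gd x X s (p m u) (K * F g m + K * dl m powr g)"
    by (rule gd_trans[OF Z s q_props(1)[OF s] p_props(1)[OF u] q_props(2)[OF s] tab A gl F0])
      (use K in auto)
  have ABC: "gd x X s u (K * F g m + K * dl m powr g + K * F g m)"
    by (rule gd_trans[OF Z s p_props(1)[OF u] u _ p_props(2)[OF u] AB B _ F0])
      (use q_props(2)[OF s, of m] tab K F0 in auto)
  have eq: "K * F g m + K * dl m powr g + K * F g m = K * c1 g * dl m powr g"
    unfolding F_def c1_def by (simp add: algebra_simps add_divide_distrib)
  have "dl m powr g \<le> h powr g" using m dl_pos[of m] g by (intro powr_mono2) auto
  then have "K * c1 g * dl m powr g \<le> K * c1 g * h powr g"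
    using K c1_pos[OF g] by (intro mult_left_mono) auto
  moreover have "0 \<le> K * F g m + K * dl m powr g + K * F g m" using F0 K by simp
  ultimately show ?thesis using gd_mono[OF ABC] eq unfolding h_def by simp
qed

end

context chain begin

lemma pair_bound:
  assumes Z: "Zt x X" and G: "Good x X g K R" and R: "Rprop R" and K: "0 \<le> K" and g: "0 < g"
    and j: "j \<le> N" and k: "k \<le> N" and ne: "t j \<noteq> t k"
  shows "norm (rsX x j k) / \<bar>t j - t k\<bar> powr g \<le> K * c1 g"
    "sqrt (norm (rsXX x X j k)) / \<bar>t j - t k\<bar> powr g \<le> K * c1 g"
proof -
  have hp: "0 < \<bar>t j - t k\<bar> powr g" using ne by simp
  have E0: "0 \<le> K * c1 g * \<bar>t j - t k\<bar> powr g" using K c1_pos[OF g] by simp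
  have gdj: "gd x X j k (K * c1 g * \<bar>t j - t k\<bar> powr g)"
  proof (cases "t j < t k")
    case True
    then have "\<bar>t j - t k\<bar> = t k - t j" by simp
    then show ?thesis using main_bound[OF Z G R K g j k True] by simp
  next
    case False
    then have "t k < t j" using ne by simp
    then have "k < j" using tless_idx k j by blast
    then show ?thesis using E0 by (intro gd_empty) auto
  qed
  then have b1: "norm (rsX x j k) \<le> K * c1 g * \<bar>t j - t k\<bar> powr g"
    and b2: "norm (rsXX x X j k) \<le> (K * c1 g * \<bar>t j - t k\<bar> powr g)\<^sup>2"
    by (auto simp: gd_def)
  show "norm (rsX x j k) / \<bar>t j - t k\<bar> powr g \<le> K * c1 g"
    using b1 hp by (simp add: pos_divide_le_eq)
  have "sqrt (norm (rsXX x X j k)) \<le> K * c1 g * \<bar>t j - t k\<bar> powr g"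
    using real_sqrt_le_mono[OF b2] E0 by simp
  then show "sqrt (norm (rsXX x X j k)) / \<bar>t j - t k\<bar> powr g \<le> K * c1 g"
    using hp by (simp add: pos_divide_le_eq)
qed

lemma holder_bound:
  assumes Z: "Zt x X" and G: "Good x X g K R" and R: "Rprop R" and K: "0 \<le> K" and g: "0 < g"
  shows "disc_holder_norm g t N x X \<le> 2 * (K * c1 g)"
proof -
  define S where "S = {(j,k). j \<le> N \<and> k \<le> N \<and> t j \<noteq> t k}"
  have fS: "finite S" unfolding S_def by (rule finite_subset[of _ "{..N} \<times> {..N}"]) auto
  have neS: "(0, N) \<in> S" unfolding S_def using t0 tN Tpos by auto
  have m1: "Max ((\<lambda>(j,k). norm (rsX x j k) / \<bar>t j - t k\<bar> powr g) ` S) \<le> K * c1 g"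
    using fS neS pair_bound(1)[OF Z G R K g] by (subst Max_le_iff) (auto simp: S_def)
  have m2: "Max ((\<lambda>(j,k). sqrt (norm (rsXX x X j k)) / \<bar>t j - t k\<bar> powr g) ` S) \<le> K * c1 g"
    using fS neS pair_bound(2)[OF Z G R K g] by (subst Max_le_iff) (auto simp: S_def)
  show ?thesis unfolding disc_holder_norm_def Let_def S_def[symmetric] using m1 m2 by simp
qed

end

lemma mom_bound:
  fixes I c d D beta p :: real
  assumes I: "0 \<le> I" and h: "I powr (1/p) \<le> c * d powr beta" and d: "0 \<le> d" "d \<le> D"
    and beta: "0 \<le> beta" and p: "0 < p"
  shows "I \<le> \<bar>c\<bar> powr p * D powr (beta * p)"
proof -
  have "I = (I powr (1/p)) powr p" using I p by (simp add: powr_powr)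
  also have "\<dots> \<le> (c * d powr beta) powr p"
    using h p by (intro powr_mono2) auto
  also have "c * d powr beta \<le> \<bar>c\<bar> * D powr beta"
    using d beta by (intro mult_mono powr_mono2) auto
  then have "(c * d powr beta) powr p \<le> (\<bar>c\<bar> * D powr beta) powr p"
    using order_trans[OF powr_ge_zero h] p by (intro powr_mono2) auto
  also have "(\<bar>c\<bar> * D powr beta) powr p = \<bar>c\<bar> powr p * D powr (beta * p)"
    by (simp add: powr_mult powr_powr)
  finally show ?thesis .
qed

lemma Markov_pos:
  fixes u :: "'w \<Rightarrow> real"
  assumes "prob_space M" "integrable M u" "\<And>x. 0 \<le> u x" "0 < c"
  shows "measure M {x\<in>space M. c \<le> u x} \<le> (\<integral>x. u x \<partial>M) / c"
  using integral_Markov_inequality_measure[of M u "space M" c] assms by auto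

context chain begin

lemma Pset_props: "(a,b) \<in> Pset r \<Longrightarrow> a \<le> N \<and> b \<le> N \<and> \<bar>t a - t b\<bar> \<le> 2 * dl r"
  unfolding Pset_def by auto

lemma prob_bound:
  fixes M :: "'w measure" and xs :: "nat \<Rightarrow> 'w \<Rightarrow> real^'d" and Xs :: "nat \<Rightarrow> 'w \<Rightarrow> real^'d^'d"
  assumes P: "prob_space M" and qe: "0 < qe" and al: "0 < \<alpha>" and g: "0 < g" and K: "0 < K"
    and R: "Rprop R"
    and m1: "\<And>j k. j \<le> N \<Longrightarrow> k \<le> N \<Longrightarrow>
        integrable M (\<lambda>\<omega>. norm (rsX (\<lambda>i. xs i \<omega>) j k) powr qe) \<and>
        (\<integral>\<omega>. norm (rsX (\<lambda>i. xs i \<omega>) j k) powr qe \<partial>M) powr (1/qe) \<le> C * \<bar>t j - t k\<bar> powr \<alpha>"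
    and m2: "\<And>j k. j \<le> N \<Longrightarrow> k \<le> N \<Longrightarrow>
        integrable M (\<lambda>\<omega>. norm (rsXX (\<lambda>i. xs i \<omega>) (\<lambda>i. Xs i \<omega>) j k) powr (qe/2)) \<and>
        (\<integral>\<omega>. norm (rsXX (\<lambda>i. xs i \<omega>) (\<lambda>i. Xs i \<omega>) j k) powr (qe/2) \<partial>M) powr (2/qe)
          \<le> C * \<bar>t j - t k\<bar> powr (2*\<alpha>)"
  shows "measure M {\<omega> \<in> space M. disc_holder_norm g t N (\<lambda>i. xs i \<omega>) (\<lambda>i. Xs i \<omega>) > 2 * (K * c1 g)}
    \<le> (\<Sum>r<R. real (card (Pset r)) * ((\<bar>C\<bar> powr qe + \<bar>C\<bar> powr (qe/2)) * (2 * dl r) powr (\<alpha> * qe) / (K * dl r powr g) powr qe))"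
proof -
  interpret P: prob_space M by (rule P)
  define u1 where "u1 = (\<lambda>j k \<omega>. norm (rsX (\<lambda>i. xs i \<omega>) j k) powr qe)"
  define u2 where "u2 = (\<lambda>j k \<omega>. norm (rsXX (\<lambda>i. xs i \<omega>) (\<lambda>i. Xs i \<omega>) j k) powr (qe/2))"
  have i1: "integrable M (u1 j k)" if "j \<le> N" "k \<le> N" for j k using m1[OF that] by (simp add: u1_def)
  have i2: "integrable M (u2 j k)" if "j \<le> N" "k \<le> N" for j k using m2[OF that] by (simp add: u2_def)
  have I1: "(\<integral>\<omega>. u1 j k \<omega> \<partial>M) \<le> \<bar>C\<bar> powr qe * D powr (\<alpha> * qe)"
    if "j \<le> N" "k \<le> N" "\<bar>t j - t k\<bar> \<le> D" for j k D
    by (rule mom_bound[where d="\<bar>t j - t k\<bar>"]) (use m1[OF that(1,2)] that qe al in \<open>auto simp: u1_def\<close>)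
  have I2: "(\<integral>\<omega>. u2 j k \<omega> \<partial>M) \<le> \<bar>C\<bar> powr (qe/2) * D powr (\<alpha> * qe)"
    if "j \<le> N" "k \<le> N" "\<bar>t j - t k\<bar> \<le> D" for j k D
  proof -
    have "(\<integral>\<omega>. u2 j k \<omega> \<partial>M) \<le> \<bar>C\<bar> powr (qe/2) * D powr ((2*\<alpha>) * (qe/2))"
      by (rule mom_bound[where d="\<bar>t j - t k\<bar>"]) (use m2[OF that(1,2)] that qe al in \<open>auto simp: u2_def\<close>)
    then show ?thesis by simp
  qed
  define lam where "lam = (\<lambda>r. K * dl r powr g)"
  have lam_pos: "0 < lam r" for r using K dl_pos[of r] by (simp add: lam_def)
  have lamq: "0 < lam r powr qe" for r using lam_pos[of r] by simp
  define Bd where "Bd = (\<lambda>r ab. {\<omega>\<in>space M. lam r powr qe \<le> u1 (fst ab) (snd ab) \<omega>}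
       \<union> {\<omega>\<in>space M. lam r powr qe \<le> u2 (fst ab) (snd ab) \<omega>})"
  have ms1: "{\<omega>\<in>space M. c \<le> u1 a b \<omega>} \<in> sets M" if "a \<le> N" "b \<le> N" for a b c
  proof -
    have [measurable]: "u1 a b \<in> borel_measurable M" using i1[OF that] by (rule borel_measurable_integrable)
    show ?thesis by measurable
  qed
  have ms2: "{\<omega>\<in>space M. c \<le> u2 a b \<omega>} \<in> sets M" if "a \<le> N" "b \<le> N" for a b c
  proof -
    have [measurable]: "u2 a b \<in> borel_measurable M" using i2[OF that] by (rule borel_measurable_integrable)
    show ?thesis by measurable
  qed
  have msB: "Bd r ab \<in> sets M" if "ab \<in> Pset r" for r ab
    using that Pset_props[of "fst ab" "snd ab" r] ms1 ms2 unfolding Bd_def by auto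
  define Bad where "Bad = (\<Union>r\<in>{..<R}. \<Union>ab\<in>Pset r. Bd r ab)"
  have msU: "(\<Union>ab\<in>Pset r. Bd r ab) \<in> sets M" for r
    using msB Pset_finite[of r] by (intro sets.finite_UN) auto
  have msBad: "Bad \<in> sets M" unfolding Bad_def by (rule sets.finite_UN) (use msU in auto)
  define Tp where "Tp = {(a,b). a \<le> b \<and> b \<le> N \<and> t a = t b}"
  have fTp: "finite Tp" unfolding Tp_def by (rule finite_subset[of _ "{..N} \<times> {..N}"]) auto
  have "AE \<omega> in M. \<forall>ab\<in>Tp. u1 (fst ab) (snd ab) \<omega> = 0 \<and> u2 (fst ab) (snd ab) \<omega> = 0"
  proof (rule AE_finite_allI[OF fTp])
    fix ab assume "ab \<in> Tp"
    then obtain a b where ab: "ab = (a,b)" "a \<le> N" "b \<le> N" "t a = t b" unfolding Tp_def by auto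
    have "(\<integral>\<omega>. u1 a b \<omega> \<partial>M) \<le> \<bar>C\<bar> powr qe * 0 powr (\<alpha> * qe)" using I1[of a b 0] ab by simp
    moreover have "0 \<le> (\<integral>\<omega>. u1 a b \<omega> \<partial>M)" by (rule integral_nonneg_AE) (simp add: u1_def)
    ultimately have "(\<integral>\<omega>. u1 a b \<omega> \<partial>M) = 0" by simp
    then have A1: "AE \<omega> in M. u1 a b \<omega> = 0"
      using integral_nonneg_eq_0_iff_AE[OF i1[OF ab(2,3)]] by (simp add: u1_def)
    have "(\<integral>\<omega>. u2 a b \<omega> \<partial>M) \<le> \<bar>C\<bar> powr (qe/2) * 0 powr (\<alpha> * qe)" using I2[of a b 0] ab by simp
    moreover have "0 \<le> (\<integral>\<omega>. u2 a b \<omega> \<partial>M)" by (rule integral_nonneg_AE) (simp add: u2_def)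
    ultimately have "(\<integral>\<omega>. u2 a b \<omega> \<partial>M) = 0" by simp
    then have A2: "AE \<omega> in M. u2 a b \<omega> = 0"
      using integral_nonneg_eq_0_iff_AE[OF i2[OF ab(2,3)]] by (simp add: u2_def)
    show "AE \<omega> in M. u1 (fst ab) (snd ab) \<omega> = 0 \<and> u2 (fst ab) (snd ab) \<omega> = 0"
      using A1 A2 ab(1) by auto
  qed
  then obtain Nn where Nn: "{\<omega>\<in>space M. \<not> (\<forall>ab\<in>Tp. u1 (fst ab) (snd ab) \<omega> = 0 \<and> u2 (fst ab) (snd ab) \<omega> = 0)} \<subseteq> Nn"
    "emeasure M Nn = 0" "Nn \<in> sets M" by (rule AE_E)
  have Nnull: "Nn \<in> null_sets M" using Nn by auto
  have incl: "{\<omega> \<in> space M. disc_holder_norm g t N (\<lambda>i. xs i \<omega>) (\<lambda>i. Xs i \<omega>) > 2 * (K * c1 g)} \<subseteq> Bad \<union> Nn"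
  proof
    fix \<omega> assume w: "\<omega> \<in> {\<omega> \<in> space M. disc_holder_norm g t N (\<lambda>i. xs i \<omega>) (\<lambda>i. Xs i \<omega>) > 2 * (K * c1 g)}"
    show "\<omega> \<in> Bad \<union> Nn"
    proof (rule ccontr)
      assume nb: "\<omega> \<notin> Bad \<union> Nn"
      have tie: "u1 a b \<omega> = 0 \<and> u2 a b \<omega> = 0" if "(a,b) \<in> Tp" for a b
        using Nn(1) nb w that by fastforce
      have Z: "Zt (\<lambda>i. xs i \<omega>) (\<lambda>i. Xs i \<omega>)"
        unfolding Zt_def
      proof (intro allI impI)
        fix a b assume "a \<le> b" "b \<le> N" "t a = t b"
        then have "(a,b) \<in> Tp" by (simp add: Tp_def)
        from tie[OF this] show "rsX (\<lambda>i. xs i \<omega>) a b = 0 \<and> rsXX (\<lambda>i. xs i \<omega>) (\<lambda>i. Xs i \<omega>) a b = 0"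
          by (simp add: u1_def u2_def)
      qed
      have G: "Good (\<lambda>i. xs i \<omega>) (\<lambda>i. Xs i \<omega>) g K R"
        unfolding Good_def
      proof (intro allI impI ballI)
        fix r ab assume r: "r < R" and ab: "ab \<in> Pset r"
        have nB: "\<omega> \<notin> Bd r ab" using nb r ab unfolding Bad_def by auto
        have ws: "\<omega> \<in> space M" using w by auto
        have n1: "\<not> lam r powr qe \<le> u1 (fst ab) (snd ab) \<omega>" using nB ws unfolding Bd_def by auto
        have n2: "\<not> lam r powr qe \<le> u2 (fst ab) (snd ab) \<omega>" using nB ws unfolding Bd_def by auto
        have "norm (rsX (\<lambda>i. xs i \<omega>) (fst ab) (snd ab)) \<le> lam r"
        proof (rule ccontr)
          assume "\<not> ?thesis"
          then have "lam r powr qe \<le> u1 (fst ab) (snd ab) \<omega>"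
            unfolding u1_def using lam_pos[of r] qe by (intro powr_mono2) auto
          then show False using n1 by simp
        qed
        moreover have "norm (rsXX (\<lambda>i. xs i \<omega>) (\<lambda>i. Xs i \<omega>) (fst ab) (snd ab)) \<le> (lam r)\<^sup>2"
        proof (rule ccontr)
          assume "\<not> ?thesis"
          then have "((lam r)\<^sup>2) powr (qe/2) \<le> u2 (fst ab) (snd ab) \<omega>"
            unfolding u2_def using lam_pos[of r] qe by (intro powr_mono2) auto
          moreover have "((lam r)\<^sup>2) powr (qe/2) = lam r powr qe"
          proof -
            have "(lam r)\<^sup>2 = lam r powr 2" using powr_realpow[of "lam r" 2] lam_pos[of r] by simp
            then have "((lam r)\<^sup>2) powr (qe/2) = lam r powr (2 * (qe/2))" by (simp only: powr_powr)
            then show ?thesis by simp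
          qed
          ultimately show False using n2 by simp
        qed
        ultimately show "gd (\<lambda>i. xs i \<omega>) (\<lambda>i. Xs i \<omega>) (fst ab) (snd ab) (K * dl r powr g)"
          by (simp add: gd_def lam_def)
      qed
      have "disc_holder_norm g t N (\<lambda>i. xs i \<omega>) (\<lambda>i. Xs i \<omega>) \<le> 2 * (K * c1 g)"
        by (rule holder_bound[OF Z G R _ g]) (use K in auto)
      then show False using w by auto
    qed
  qed
  define Cst where "Cst = (\<lambda>r. (\<bar>C\<bar> powr qe + \<bar>C\<bar> powr (qe/2)) * (2 * dl r) powr (\<alpha> * qe) / (K * dl r powr g) powr qe)"
  have mBd: "measure M (Bd r ab) \<le> Cst r" if "ab \<in> Pset r" for r ab
  proof -
    obtain a b where ab: "ab = (a,b)" by fastforce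
    have pr: "a \<le> N" "b \<le> N" "\<bar>t a - t b\<bar> \<le> 2 * dl r" using Pset_props[of a b r] that ab by auto
    have "measure M (Bd r ab) \<le> measure M {\<omega>\<in>space M. lam r powr qe \<le> u1 a b \<omega>} + measure M {\<omega>\<in>space M. lam r powr qe \<le> u2 a b \<omega>}"
      unfolding Bd_def ab fst_conv snd_conv by (rule measure_Un_le) (use ms1 ms2 pr in auto)
    also have "\<dots> \<le> (\<integral>\<omega>. u1 a b \<omega> \<partial>M) / lam r powr qe + (\<integral>\<omega>. u2 a b \<omega> \<partial>M) / lam r powr qe"
      by (intro add_mono Markov_pos[OF P] i1 i2 pr lamq) (auto simp: u1_def u2_def)
    also have "\<dots> \<le> (\<bar>C\<bar> powr qe * (2 * dl r) powr (\<alpha> * qe)) / lam r powr qe + (\<bar>C\<bar> powr (qe/2) * (2 * dl r) powr (\<alpha> * qe)) / lam r powr qe"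
      by (intro add_mono divide_right_mono I1 I2 pr) (use lamq in auto)
    also have "\<dots> = Cst r" unfolding Cst_def lam_def by (simp only: distrib_right add_divide_distrib)
    finally show ?thesis .
  qed
  have "measure M {\<omega> \<in> space M. disc_holder_norm g t N (\<lambda>i. xs i \<omega>) (\<lambda>i. Xs i \<omega>) > 2 * (K * c1 g)}
      \<le> measure M (Bad \<union> Nn)"
    by (rule P.finite_measure_mono[OF incl]) (use msBad Nn in auto)
  also have "\<dots> = measure M Bad" by (rule measure_Un_null_set[OF msBad Nnull])
  also have "\<dots> \<le> (\<Sum>r<R. measure M (\<Union>ab\<in>Pset r. Bd r ab))"
    unfolding Bad_def by (rule P.finite_measure_subadditive_finite) (use msU in auto)
  also have "\<dots> \<le> (\<Sum>r<R. \<Sum>ab\<in>Pset r. measure M (Bd r ab))"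
    by (intro sum_mono P.finite_measure_subadditive_finite Pset_finite) (use msB in auto)
  also have "\<dots> \<le> (\<Sum>r<R. real (card (Pset r)) * Cst r)"
    by (intro sum_mono sum_bounded_above mBd) auto
  finally show ?thesis by (simp add: Cst_def)
qed

end

lemma half_pow_powr: "(1/2::real) powr b = 2 powr (-b)"
proof -
  have "(1/2::real) powr b = 1 powr b / 2 powr b" by (rule powr_divide)
  also have "\<dots> = inverse (2 powr b)" by (simp add: divide_inverse)
  also have "\<dots> = 2 powr (-b)" by (rule powr_minus[symmetric])
  finally show ?thesis .
qed

lemma div_pow_powr: fixes T :: real assumes "0 < T" shows "(T / 2^r) powr b = T powr b * (2 powr (-b))^r"
proof (induction r)
  case 0 then show ?case by (simp only: power_0 div_by_1 mult_1_right)
next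
  case (Suc r)
  have "T / 2^Suc r = (T / 2^r) * (1/2)" by simp
  then have "(T / 2^Suc r) powr b = (T / 2^r) powr b * (1/2) powr b" by (simp only: powr_mult)
  also have "\<dots> = T powr b * (2 powr (-b))^r * 2 powr (-b)" by (simp only: half_pow_powr Suc.IH)
  also have "\<dots> = T powr b * (2 powr (-b))^Suc r" by (simp only: power_Suc2 mult.assoc)
  finally show ?case .
qed

context chain begin

lemma term_bound:
  fixes C0 K qe al g :: real
  assumes C0: "0 \<le> C0" and K: "0 < K"
  shows "real (card (Pset r)) * (C0 * (2 * dl r) powr (al * qe) / (K * dl r powr g) powr qe)
    \<le> 36 * (C0 * 2 powr (al * qe) / K powr qe * T powr (al * qe - g * qe)) * (2 powr (1 - (al * qe - g * qe)))^r"
proof -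
  define b where "b = al * qe - g * qe"
  define A where "A = C0 * 2 powr (al * qe) / K powr qe"
  have A0: "0 \<le> A" using C0 by (simp add: A_def)
  have e1: "(2 * dl r) powr (al * qe) = 2 powr (al * qe) * dl r powr (al * qe)" by (rule powr_mult)
  have e2: "(K * dl r powr g) powr qe = K powr qe * dl r powr (g * qe)" by (simp add: powr_mult powr_powr)
  have e3: "dl r powr (al * qe) / dl r powr (g * qe) = dl r powr b" by (simp add: b_def powr_diff)
  have V: "C0 * (2 * dl r) powr (al * qe) / (K * dl r powr g) powr qe = A * dl r powr b"
    unfolding e1 e2 e3[symmetric] A_def by (simp only: mult.assoc[symmetric] times_divide_times_eq)
  have c: "real (card (Pset r)) \<le> 36 * 2^r"
  proof -
    have "card (Pset r) \<le> 12 * (2^Suc r + 1)" by (rule card_Pset)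
    also have "\<dots> \<le> 36 * 2^r" by simp
    finally have "real (card (Pset r)) \<le> real (36 * 2^r)" by (simp only: of_nat_le_iff)
    then show ?thesis by simp
  qed
  have d: "2^r * dl r powr b = T powr b * (2 powr (1 - b))^r"
  proof -
    have "dl r powr b = T powr b * (2 powr (-b))^r" unfolding dl_def by (rule div_pow_powr[OF Tpos])
    moreover have e: "(2::real) * 2 powr (-b) = 2 powr (1 - b)"
      by (simp add: powr_diff powr_minus divide_inverse)
    moreover have "(2 powr (1-b))^r = 2^r * (2 powr (-b))^r" by (simp only: e[symmetric] power_mult_distrib)
    ultimately show ?thesis by (simp only: ac_simps)
  qed
  have "real (card (Pset r)) * (A * dl r powr b) \<le> (36 * 2^r) * (A * dl r powr b)"
    using c A0 by (intro mult_right_mono) auto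
  also have "\<dots> = 36 * A * (2^r * dl r powr b)" by simp
  also have "\<dots> = 36 * (A * T powr b) * (2 powr (1 - b))^r" unfolding d by (simp only: ac_simps)
  finally show ?thesis unfolding V A_def b_def .
qed

end

context chain begin

lemma exists_R: "\<exists>R. Rprop R"
proof -
  define Gp where "Gp = (\<lambda>(a,b). t b - t a) ` {(a,b). a \<le> N \<and> b \<le> N \<and> t a < t b}"
  have fin: "finite Gp" unfolding Gp_def
    by (rule finite_imageI, rule finite_subset[of _ "{..N} \<times> {..N}"]) auto
  have ne: "T \<in> Gp" unfolding Gp_def using t0 tN Tpos by (auto intro!: image_eqI[where x="(0,N)"])
  have pos: "\<forall>e\<in>Gp. 0 < e" unfolding Gp_def by auto
  define eps where "eps = Min Gp"
  have eps: "0 < eps" unfolding eps_def using fin ne pos by (subst Min_gr_iff) auto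
  obtain R where R: "(1/2::real)^R < eps / (2 * T)"
    using real_arch_pow_inv[of "eps / (2*T)" "1/2"] eps Tpos by auto
  have "dl R = T * (1/2)^R" by (simp add: dl_def power_one_over)
  moreover have "T * (1/2)^R < T * (eps / (2 * T))" by (rule mult_strict_left_mono[OF R Tpos])
  moreover have "T * (eps / (2 * T)) = eps / 2" using Tpos by simp
  ultimately have dR: "2 * dl R < eps" by simp
  have "Rprop R" unfolding Rprop_def
  proof (intro allI impI)
    fix a b assume "a \<le> N" "b \<le> N" "t a < t b"
    then have "t b - t a \<in> Gp" unfolding Gp_def by (auto intro!: image_eqI[where x="(a,b)"])
    then have "eps \<le> t b - t a" unfolding eps_def using fin by simp
    then show "2 * dl R < t b - t a" using dR by simp
  qed
  then show ?thesis by blast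
qed

lemma total_bound:
  fixes M :: "'w measure" and xs :: "nat \<Rightarrow> 'w \<Rightarrow> real^'d" and Xs :: "nat \<Rightarrow> 'w \<Rightarrow> real^'d^'d"
  assumes P: "prob_space M" and qe: "0 < qe" and al: "0 < \<alpha>" and g: "0 < g" and K: "0 < K"
    and beta: "1 < \<alpha> * qe - g * qe"
    and m1: "\<And>j k. j \<le> N \<Longrightarrow> k \<le> N \<Longrightarrow>
        integrable M (\<lambda>\<omega>. norm (rsX (\<lambda>i. xs i \<omega>) j k) powr qe) \<and>
        (\<integral>\<omega>. norm (rsX (\<lambda>i. xs i \<omega>) j k) powr qe \<partial>M) powr (1/qe) \<le> C * \<bar>t j - t k\<bar> powr \<alpha>"
    and m2: "\<And>j k. j \<le> N \<Longrightarrow> k \<le> N \<Longrightarrow>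
        integrable M (\<lambda>\<omega>. norm (rsXX (\<lambda>i. xs i \<omega>) (\<lambda>i. Xs i \<omega>) j k) powr (qe/2)) \<and>
        (\<integral>\<omega>. norm (rsXX (\<lambda>i. xs i \<omega>) (\<lambda>i. Xs i \<omega>) j k) powr (qe/2) \<partial>M) powr (2/qe)
          \<le> C * \<bar>t j - t k\<bar> powr (2*\<alpha>)"
  shows "measure M {\<omega> \<in> space M. disc_holder_norm g t N (\<lambda>i. xs i \<omega>) (\<lambda>i. Xs i \<omega>) > 2 * (K * (2 / (1 - (1/2) powr g) + 1))}
    \<le> 36 * ((\<bar>C\<bar> powr qe + \<bar>C\<bar> powr (qe/2)) * 2 powr (\<alpha> * qe) / K powr qe * T powr (\<alpha> * qe - g * qe))
        / (1 - 2 powr (1 - (\<alpha> * qe - g * qe)))"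
proof -
  obtain R where R: "Rprop R" using exists_R by blast
  define C0 where "C0 = \<bar>C\<bar> powr qe + \<bar>C\<bar> powr (qe/2)"
  define A where "A = C0 * 2 powr (\<alpha> * qe) / K powr qe * T powr (\<alpha> * qe - g * qe)"
  define rho where "rho = (2::real) powr (1 - (\<alpha> * qe - g * qe))"
  have A0: "0 \<le> A" by (simp add: A_def C0_def)
  have rho: "0 \<le> rho" "rho < 1" unfolding rho_def using beta
    by (auto intro: order.strict_trans2[OF powr_less_mono[of _ 0]])
  have "measure M {\<omega> \<in> space M. disc_holder_norm g t N (\<lambda>i. xs i \<omega>) (\<lambda>i. Xs i \<omega>) > 2 * (K * c1 g)}
    \<le> (\<Sum>r<R. real (card (Pset r)) * (C0 * (2 * dl r) powr (\<alpha> * qe) / (K * dl r powr g) powr qe))"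
    unfolding C0_def by (rule prob_bound[OF P qe al g K R m1 m2])
  also have "\<dots> \<le> (\<Sum>r<R. 36 * A * rho^r)"
    by (intro sum_mono) (use term_bound[of C0 K r \<alpha> qe g for r] K in \<open>simp_all add: A_def rho_def C0_def\<close>)
  also have "\<dots> = 36 * A * (\<Sum>r<R. rho^r)" by (simp add: sum_distrib_left)
  also have "(\<Sum>r<R. rho^r) \<le> 1 / (1 - rho)"
  proof -
    have "(\<Sum>r<R. rho^r) = (1 - rho^R) / (1 - rho)" using rho by (simp add: sum_gp_strict)
    also have "\<dots> \<le> 1 / (1 - rho)" using rho by (intro divide_right_mono) auto
    finally show ?thesis .
  qed
  then have "36 * A * (\<Sum>r<R. rho^r) \<le> 36 * A * (1 / (1 - rho))"
    using A0 by (intro mult_left_mono) auto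
  finally show ?thesis by (simp add: c1_def A_def C0_def rho_def)
qed

end

theorem lemma6p5:
  fixes M :: "'w measure"
    and T q \<alpha> \<gamma> C B :: real
    and tau :: "nat \<Rightarrow> nat \<Rightarrow> real" and N :: "nat \<Rightarrow> nat"
    and xi :: "nat \<Rightarrow> nat \<Rightarrow> 'w \<Rightarrow> real^'d"
    and Xi :: "nat \<Rightarrow> nat \<Rightarrow> 'w \<Rightarrow> real^'d^'d"
  assumes "prob_space M"
    and "T > 0"
    and part: "\<And>n. n \<ge> 1 \<Longrightarrow> is_partition T (tau n) (N n)"
    and mesh_lim: "(\<lambda>n. mesh (tau n) (N n)) \<longlonglongrightarrow> 0"
    and mesh_bd: "\<And>n. n \<ge> 1 \<Longrightarrow> real (N n) * mesh (tau n) (N n) \<le> B"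
    and meas_xi: "\<And>n j. xi n j \<in> borel_measurable M"
    and meas_Xi: "\<And>n j. Xi n j \<in> borel_measurable M"
    and "q > 0" and "0 < \<alpha>" and "\<alpha> \<le> 1/2"
    and mom1: "\<And>n j k. n \<ge> 1 \<Longrightarrow> j \<le> N n \<Longrightarrow> k \<le> N n \<Longrightarrow>
        integrable M (\<lambda>\<omega>. norm (rsX (\<lambda>i. xi n i \<omega>) j k) powr q) \<and>
        (\<integral>\<omega>. norm (rsX (\<lambda>i. xi n i \<omega>) j k) powr q \<partial>M) powr (1/q)
          \<le> C * \<bar>tau n j - tau n k\<bar> powr \<alpha>"
    and mom2: "\<And>n j k. n \<ge> 1 \<Longrightarrow> j \<le> N n \<Longrightarrow> k \<le> N n \<Longrightarrow>
        integrable M (\<lambda>\<omega>. norm (rsXX (\<lambda>i. xi n i \<omega>) (\<lambda>i. Xi n i \<omega>) j k) powr (q/2)) \<and>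
        (\<integral>\<omega>. norm (rsXX (\<lambda>i. xi n i \<omega>) (\<lambda>i. Xi n i \<omega>) j k) powr (q/2) \<partial>M) powr (2/q)
          \<le> C * \<bar>tau n j - tau n k\<bar> powr (2*\<alpha>)"
    and "0 < \<gamma>" and "\<gamma> < \<alpha> - 1/q"
  shows "((\<lambda>K. SUP n\<in>{1..}. measure M {\<omega> \<in> space M.
            disc_holder_norm \<gamma> (tau n) (N n) (\<lambda>i. xi n i \<omega>) (\<lambda>i. Xi n i \<omega>) > K})
          \<longlongrightarrow> 0) at_top"
proof -
  note P = assms(1) and Tp = assms(2) and qp = assms(8) and al = assms(9) and gp = assms(13) and gl = assms(14)
  define c where "c = 2 / (1 - (1/2) powr \<gamma>) + 1"
  have cpos: "0 < c" unfolding c_def using powr_less_mono2[of \<gamma> "1/2" 1] gp by (simp add: add_pos_nonneg)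
  define be where "be = \<alpha> * q - \<gamma> * q"
  have beta: "1 < be"
  proof -
    have "1 / q < \<alpha> - \<gamma>" using gl by simp
    then have "(1/q) * q < (\<alpha> - \<gamma>) * q" using qp by (intro mult_strict_right_mono) auto
    then show ?thesis using qp by (simp add: be_def algebra_simps)
  qed
  define D where "D = 36 * ((\<bar>C\<bar> powr q + \<bar>C\<bar> powr (q/2)) * 2 powr (\<alpha> * q) * T powr be) / (1 - 2 powr (1 - be))"
  define E where "E = D * (2 * c) powr q"
  define meas where "meas = (\<lambda>K n. measure M {\<omega> \<in> space M.
            disc_holder_norm \<gamma> (tau n) (N n) (\<lambda>i. xi n i \<omega>) (\<lambda>i. Xi n i \<omega>) > K})"
  have bnd: "meas Kp n \<le> E * Kp powr (-q)" if n: "1 \<le> n" and Kp: "0 < Kp" for n Kp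
  proof -
    interpret chain T "tau n" "N n"
      using part[OF n] Tp by unfold_locales (auto simp: is_partition_def)
    have beta': "1 < \<alpha> * q - \<gamma> * q" using beta by (simp add: be_def)
    define K where "K = Kp / (2 * c)"
    have K: "0 < K" using Kp cpos by (simp add: K_def)
    have Kp_eq0: "Kp = 2 * (K * c)" using cpos by (simp add: K_def)
    have Kp_eq: "Kp = 2 * (K * (2 / (1 - (1/2) powr \<gamma>) + 1))" using Kp_eq0 by (simp only: c_def)
    have "meas Kp n \<le> 36 * ((\<bar>C\<bar> powr q + \<bar>C\<bar> powr (q/2)) * 2 powr (\<alpha> * q) / K powr q * T powr (\<alpha> * q - \<gamma> * q))
        / (1 - 2 powr (1 - (\<alpha> * q - \<gamma> * q)))"
      unfolding meas_def Kp_eq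
      by (rule total_bound[OF P qp al gp K beta' mom1[OF n] mom2[OF n]])
    also have "\<dots> = D / K powr q" by (simp add: D_def be_def)
    also have "D / K powr q = E * Kp powr (-q)"
    proof -
      have "K powr q = Kp powr q / (2*c) powr q" unfolding K_def by (rule powr_divide)
      then have "D / K powr q = D * (2*c) powr q / Kp powr q" by (simp only: divide_divide_eq_right)
      also have "\<dots> = E * Kp powr (-q)" by (simp only: E_def powr_minus divide_inverse)
      finally show ?thesis .
    qed
    finally show ?thesis .
  qed
  have nn: "0 \<le> meas Kp n" for Kp n by (simp add: meas_def)
  have up: "(SUP n\<in>{1..}. meas Kp n) \<le> E * Kp powr (-q)" if "0 < Kp" for Kp
    by (rule cSUP_least) (use bnd that in auto)
  have lo: "0 \<le> (SUP n\<in>{1..}. meas Kp n)" if "0 < Kp" for Kp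
  proof -
    have "bdd_above (meas Kp ` {1..})" using bnd that by (intro bdd_aboveI2) auto
    then have "meas Kp 1 \<le> (SUP n\<in>{1..}. meas Kp n)" using cSUP_upper[of 1 "{1..}" "meas Kp"] by auto
    then show ?thesis using nn[of Kp 1] by linarith
  qed
  have lim: "((\<lambda>K. E * K powr (-q)) \<longlongrightarrow> 0) at_top"
  proof -
    have "((\<lambda>K. K powr (-q)) \<longlongrightarrow> 0) at_top"
      by (rule tendsto_neg_powr) (use qp filterlim_ident in auto)
    then show ?thesis using tendsto_mult[OF tendsto_const[of E]] by fastforce
  qed
  have "((\<lambda>K. SUP n\<in>{1..}. meas K n) \<longlongrightarrow> 0) at_top"
  proof (rule tendsto_sandwich[OF _ _ tendsto_const lim])
    show "\<forall>\<^sub>F K in at_top. 0 \<le> (SUP n\<in>{1..}. meas K n)"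
      using eventually_gt_at_top[of "0::real"] by eventually_elim (rule lo)
    show "\<forall>\<^sub>F K in at_top. (SUP n\<in>{1..}. meas K n) \<le> E * K powr (-q)"
      using eventually_gt_at_top[of "0::real"] by eventually_elim (rule up)
  qed
  then show ?thesis by (simp add: meas_def)
qed

end
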